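(* Let $\mathcal A\colon\bigcup_{n,m\ge1}Z^{(n,m)}\to\mathcal F$ be any representation learner and $\alpha>0$, $\nu>0$. Then, with $(\mathbf z,\vec P)$ generated by the $(n,m)$-sampling process from the environment $Q$, $$\Pr\left\{(\mathbf z,\vec P):d_\nu\big(E^*_{\mathcal G}(\mathcal A(\mathbf z),\mathbf z),E^*_{\mathcal G}(\mathcal A(\mathbf z),\vec P)\big)>\alpha\right\}\le\Pr\left\{(\mathbf z,\vec P):\exists\,\vec g\in\mathcal G^n,f\in\mathcal F,\ d_\nu\big(E(\vec g\circ\bar f,\mathbf z),E(\vec g\circ\bar f,\vec P)\big)>\alpha\right\}.$$
   Context: $X,Y,A,V$ sets, $Z=X\times Y$, $\mathcal F$ maps $X\to V$, $\mathcal G$ maps $V\to A$, $l\colon Y\times A\to[0,M]$, $l_{g\circ f}(x,y)=l(y,g(f(x)))$. $Q$ is a probability measure on a set $\mathbb P$ of probability measures on $Z$ (with respect to which all $l_{g\circ f}$ are measurable). $(n,m)$-sampling: draw $\vec P=(P_1,\dots,P_n)$ independently according to $Q$, then for each $i$ draw $z_{i1},\dots,z_{im}$ independently from $P_i$, forming $\mathbf z=(z_{ij})\in Z^{(n,m)}$. $E^*_{\mathcal G}(f,\mathbf z)=\frac1n\sum_i\inf_{g\in\mathcal G}\frac1m\sum_j l_{g\circ f}(z_{ij})$; $E^*_{\mathcal G}(f,\vec P)=\frac1n\sum_i\inf_{g\in\mathcal G}\int l_{g\circ f}dP_i$. For $\vec g=(g_1,\dots,g_n)\in\mathcal G^n$: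 $E(\vec g\circ\bar f,\mathbf z)=\frac1{nm}\sum_{i,j}l_{g_i\circ f}(z_{ij})$, $E(\vec g\circ\bar f,\vec P)=\frac1n\sum_i\int l_{g_i\circ f}dP_i$. $d_\nu(x,y)=\frac{|x-y|}{\nu+x+y}$. All events are assumed measurable. *)

theory Defs
  imports "HOL-Probability.Probability"
begin

definition d_nu :: "real \<Rightarrow> real \<Rightarrow> real \<Rightarrow> real" where
  "d_nu \<nu> x y = \<bar>x - y\<bar> / (\<nu> + x + y)"

definition loss_comp :: "('y \<Rightarrow> 'a \<Rightarrow> real) \<Rightarrow> ('v \<Rightarrow> 'a) \<Rightarrow> ('x \<Rightarrow> 'v) \<Rightarrow> 'x \<times> 'y \<Rightarrow> real" where
  "loss_comp l g f z = l (snd z) (g (f (fst z)))"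

text \<open>A multisample z in Z^(n,m) is a function on {..<n} x {..<m};
  a vector of tasks P is a function on {..<n}.\<close>

definition Estar_emp ::
  "('y \<Rightarrow> 'a \<Rightarrow> real) \<Rightarrow> ('v \<Rightarrow> 'a) set \<Rightarrow> nat \<Rightarrow> nat \<Rightarrow> ('x \<Rightarrow> 'v) \<Rightarrow> (nat \<times> nat \<Rightarrow> 'x \<times> 'y) \<Rightarrow> real" where
  "Estar_emp l G n m f z =
     (1 / real n) * (\<Sum>i<n. (INF g\<in>G. (1 / real m) * (\<Sum>j<m. loss_comp l g f (z (i, j)))))"

definition Estar_true ::
  "('y \<Rightarrow> 'a \<Rightarrow> real) \<Rightarrow> ('v \<Rightarrow> 'a) set \<Rightarrow> nat \<Rightarrow> ('x \<Rightarrow> 'v) \<Rightarrow> (nat \<Rightarrow> ('x \<times> 'y) measure) \<Rightarrow> real" where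
  "Estar_true l G n f Ps =
     (1 / real n) * (\<Sum>i<n. (INF g\<in>G. (\<integral>z. loss_comp l g f z \<partial>(Ps i))))"

definition E_emp ::
  "('y \<Rightarrow> 'a \<Rightarrow> real) \<Rightarrow> nat \<Rightarrow> nat \<Rightarrow> (nat \<Rightarrow> 'v \<Rightarrow> 'a) \<Rightarrow> ('x \<Rightarrow> 'v) \<Rightarrow> (nat \<times> nat \<Rightarrow> 'x \<times> 'y) \<Rightarrow> real" where
  "E_emp l n m gs f z =
     (1 / (real n * real m)) * (\<Sum>i<n. \<Sum>j<m. loss_comp l (gs i) f (z (i, j)))"

definition E_true ::
  "('y \<Rightarrow> 'a \<Rightarrow> real) \<Rightarrow> nat \<Rightarrow> (nat \<Rightarrow> 'v \<Rightarrow> 'a) \<Rightarrow> ('x \<Rightarrow> 'v) \<Rightarrow> (nat \<Rightarrow> ('x \<times> 'y) measure) \<Rightarrow> real" where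
  "E_true l n gs f Ps =
     (1 / real n) * (\<Sum>i<n. (\<integral>z. loss_comp l (gs i) f z \<partial>(Ps i)))"

definition sample_space ::
  "'z measure \<Rightarrow> 'z measure measure \<Rightarrow> nat \<Rightarrow> nat \<Rightarrow> ((nat \<times> nat \<Rightarrow> 'z) \<times> (nat \<Rightarrow> 'z measure)) measure" where
  "sample_space Mz Q n m =
     (PiM ({..<n} \<times> {..<m}) (\<lambda>_. Mz)) \<Otimes>\<^sub>M (PiM {..<n} (\<lambda>_. Q))"

definition nm_sampling ::
  "'z measure \<Rightarrow> 'z measure measure \<Rightarrow> nat \<Rightarrow> nat \<Rightarrow> ((nat \<times> nat \<Rightarrow> 'z) \<times> (nat \<Rightarrow> 'z measure)) measure" where
  "nm_sampling Mz Q n m =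
     PiM {..<n} (\<lambda>_. Q) \<bind> (\<lambda>Ps.
       PiM ({..<n} \<times> {..<m}) (\<lambda>ij. Ps (fst ij)) \<bind> (\<lambda>z.
         return (sample_space Mz Q n m) (z, Ps)))"

end

theory Submission
  imports Defs
begin

lemma d_nu_sym: "d_nu \<nu> x y = d_nu \<nu> y x"
  unfolding d_nu_def by (simp add: abs_minus_commute add.commute add.left_commute)

lemma approx_one:
  fixes a b :: "nat \<Rightarrow> 'g \<Rightarrow> real"
  assumes G: "G \<noteq> {}" and a0: "\<And>i g. 0 \<le> a i g" and b0: "\<And>i g. 0 \<le> b i g"
    and n: "1 \<le> n" and nu: "\<nu> > 0" and al: "\<alpha> > 0"
    and X: "X = (1 / real n) * (\<Sum>i<n. INF g\<in>G. a i g)"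
    and Y: "Y = (1 / real n) * (\<Sum>i<n. INF g\<in>G. b i g)"
    and XY: "Y \<le> X" and d: "d_nu \<nu> X Y > \<alpha>"
  shows "\<exists>gs. (\<forall>i<n. gs i \<in> G) \<and>
     d_nu \<nu> ((1 / real n) * (\<Sum>i<n. a i (gs i))) ((1 / real n) * (\<Sum>i<n. b i (gs i))) > \<alpha>"
proof -
  have bdda: "bdd_below ((a i) ` G)" for i using a0 by (intro bdd_belowI[of _ 0]) auto
  have bddb: "bdd_below ((b i) ` G)" for i using b0 by (intro bdd_belowI[of _ 0]) auto
  have Ya: "0 \<le> (INF g\<in>G. b i g)" for i using G b0 by (intro cINF_greatest) auto
  have Xa: "0 \<le> (INF g\<in>G. a i g)" for i using G a0 by (intro cINF_greatest) auto
  have X0: "X \<ge> 0" unfolding X using Xa by (simp add: sum_nonneg)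
  have Y0: "Y \<ge> 0" unfolding Y using Ya by (simp add: sum_nonneg)
  define K where "K = X - Y - \<alpha> * (\<nu> + X + Y)"
  have pos: "\<nu> + X + Y > 0" using X0 Y0 nu by linarith
  have "\<alpha> < (X - Y) / (\<nu> + X + Y)" using d XY unfolding d_nu_def by simp
  then have "\<alpha> * (\<nu> + X + Y) < X - Y" using pos by (simp add: pos_less_divide_eq)
  then have K: "K > 0" unfolding K_def by simp
  have a1: "\<alpha> < 1"
  proof (rule ccontr)
    assume "\<not> \<alpha> < 1"
    then have "\<alpha> * (\<nu> + X + Y) \<ge> 1 * (\<nu> + X + Y)" using pos by (intro mult_right_mono) auto
    then have "\<alpha> * (\<nu> + X + Y) \<ge> \<nu> + X + Y" by simp
    then show False using K unfolding K_def using nu Y0 by linarith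
  qed
  define \<delta> where "\<delta> = K / (2 * (1 + \<alpha>))"
  have dpos: "\<delta> > 0" unfolding \<delta>_def using K al by simp
  have "\<forall>i. \<exists>g. i < n \<longrightarrow> g \<in> G \<and> b i g < (INF g\<in>G. b i g) + \<delta>"
  proof
    fix i
    have "(INF g\<in>G. b i g) < (INF g\<in>G. b i g) + \<delta>" using dpos by simp
    then obtain g where "g \<in> G" "b i g < (INF g\<in>G. b i g) + \<delta>"
      using G by (meson cINF_less_iff bddb)
    then show "\<exists>g. i < n \<longrightarrow> g \<in> G \<and> b i g < (INF g\<in>G. b i g) + \<delta>" by blast
  qed
  then obtain gs where gs: "\<And>i. i < n \<Longrightarrow> gs i \<in> G \<and> b i (gs i) < (INF g\<in>G. b i g) + \<delta>"
    by metis
  define X' where "X' = (1 / real n) * (\<Sum>i<n. a i (gs i))"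
  define Y' where "Y' = (1 / real n) * (\<Sum>i<n. b i (gs i))"
  have npos: "real n > 0" using n by simp
  have "(\<Sum>i<n. INF g\<in>G. a i g) \<le> (\<Sum>i<n. a i (gs i))"
    by (rule sum_mono) (use gs bdda in \<open>auto intro: cINF_lower\<close>)
  then have XX': "X \<le> X'" unfolding X X'_def using npos by (simp add: divide_right_mono)
  have "(\<Sum>i<n. INF g\<in>G. b i g) \<le> (\<Sum>i<n. b i (gs i))"
    by (rule sum_mono) (use gs bddb in \<open>auto intro: cINF_lower\<close>)
  then have YY': "Y \<le> Y'" unfolding Y Y'_def using npos by (simp add: divide_right_mono)
  have "(\<Sum>i<n. b i (gs i)) < (\<Sum>i<n. (INF g\<in>G. b i g) + \<delta>)"
    by (rule sum_strict_mono) (use gs n in \<open>auto simp: lessThan_empty_iff\<close>)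
  then have "(\<Sum>i<n. b i (gs i)) < (\<Sum>i<n. (INF g\<in>G. b i g)) + real n * \<delta>"
    by (simp add: sum.distrib)
  then have Y'd: "Y' < Y + \<delta>" unfolding Y Y'_def using npos
    by (simp add: divide_simps mult.commute)
  have e1: "X' * (1 - \<alpha>) \<ge> X * (1 - \<alpha>)" using XX' a1 by (intro mult_right_mono) auto
  have e2: "Y' * (1 + \<alpha>) \<le> (Y + \<delta>) * (1 + \<alpha>)" using Y'd al by (intro mult_right_mono) auto
  have e3: "(Y + \<delta>) * (1 + \<alpha>) = Y * (1 + \<alpha>) + K / 2" unfolding \<delta>_def using al
    by (simp add: field_simps)
  have key: "X' - Y' > \<alpha> * (\<nu> + X' + Y')"
    using e1 e2 e3 K unfolding K_def by (simp add: algebra_simps)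
  have X'0: "X' \<ge> 0" using X0 XX' by linarith
  have Y'0: "Y' \<ge> 0" using Y0 YY' by linarith
  have pos': "\<nu> + X' + Y' > 0" using X'0 Y'0 nu by linarith
  have "X' - Y' > 0" using key pos' al by (smt (verit) mult_pos_pos)
  then have "d_nu \<nu> X' Y' = (X' - Y') / (\<nu> + X' + Y')" unfolding d_nu_def by simp
  also have "\<dots> > \<alpha>" using key pos' by (simp add: pos_less_divide_eq)
  finally show ?thesis using gs unfolding X'_def Y'_def by blast
qed

lemma approx_two:
  fixes a b :: "nat \<Rightarrow> 'g \<Rightarrow> real"
  assumes G: "G \<noteq> {}" and a0: "\<And>i g. 0 \<le> a i g" and b0: "\<And>i g. 0 \<le> b i g"
    and n: "1 \<le> n" and nu: "\<nu> > 0" and al: "\<alpha> > 0"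
    and d: "d_nu \<nu> ((1 / real n) * (\<Sum>i<n. INF g\<in>G. a i g)) ((1 / real n) * (\<Sum>i<n. INF g\<in>G. b i g)) > \<alpha>"
  shows "\<exists>gs. (\<forall>i<n. gs i \<in> G) \<and>
     d_nu \<nu> ((1 / real n) * (\<Sum>i<n. a i (gs i))) ((1 / real n) * (\<Sum>i<n. b i (gs i))) > \<alpha>"
proof (cases "(1 / real n) * (\<Sum>i<n. INF g\<in>G. b i g) \<le> (1 / real n) * (\<Sum>i<n. INF g\<in>G. a i g)")
  case True
  show ?thesis by (rule approx_one[OF G a0 b0 n nu al refl refl True d])
next
  case False
  then have F: "(1 / real n) * (\<Sum>i<n. INF g\<in>G. a i g) \<le> (1 / real n) * (\<Sum>i<n. INF g\<in>G. b i g)"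
    by linarith
  have d': "d_nu \<nu> ((1 / real n) * (\<Sum>i<n. INF g\<in>G. b i g)) ((1 / real n) * (\<Sum>i<n. INF g\<in>G. a i g)) > \<alpha>"
    using d by (simp add: d_nu_sym)
  from approx_one[OF G b0 a0 n nu al refl refl F d'] show ?thesis
    by (simp add: d_nu_sym)
qed

lemma bind_emeasure_le1:
  assumes "emeasure M (space M) \<le> 1"
  shows "emeasure (M \<bind> f) X \<le> 1"
proof (cases "space M = {}")
  case True
  show ?thesis using True emeasure_space[of "count_space {}" X] by (simp add: bind_empty)
next
  case False
  define N0 where "N0 = f (SOME x. x \<in> space M)"
  define D where "D = distr M (subprob_algebra N0) f"
  have b: "M \<bind> f = join D" using False by (simp add: bind_nonempty D_def N0_def)
  have "emeasure (join D) X \<le> (\<integral>\<^sup>+ M'. emeasure M' X \<partial>D)"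
    unfolding join_def emeasure_measure_of_conv by simp
  also have "\<dots> \<le> (\<integral>\<^sup>+ M'. 1 \<partial>D)"
  proof (rule nn_integral_mono)
    fix M' assume "M' \<in> space D"
    then have "subprob_space M'" by (simp add: D_def space_subprob_algebra)
    then show "emeasure M' X \<le> 1" by (rule subprob_space.subprob_emeasure_le_1)
  qed
  also have "\<dots> = emeasure D (space D)" by simp
  also have "\<dots> \<le> emeasure M (f -` space D \<inter> space M)"
    unfolding D_def distr_def emeasure_measure_of_conv by simp
  also have "\<dots> \<le> emeasure M (space M)" by (rule emeasure_space)
  finally show ?thesis using b assms by simp
qed

lemma space_nm_sampling:
  assumes Q_env: "Q \<in> space (prob_algebra (prob_algebra Mz))"
  shows "space (nm_sampling Mz Q n m) \<subseteq> space (sample_space Mz Q n m)"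
proof (cases "space (PiM {..<n} (\<lambda>_. Q)) = {}")
  case True
  then show ?thesis by (simp add: nm_sampling_def bind_empty)
next
  case False
  have spQ: "space Q = space (prob_algebra Mz)"
    using Q_env by (intro sets_eq_imp_space_eq) (simp add: space_prob_algebra)
  have inner: "sets (PiM ({..<n} \<times> {..<m}) (\<lambda>ij. Ps (fst ij)) \<bind> (\<lambda>z.
         return (sample_space Mz Q n m) (z, Ps))) = sets (sample_space Mz Q n m)"
    if Ps: "Ps \<in> space (PiM {..<n} (\<lambda>_. Q))" for Ps
  proof (rule sets_bind)
    show "space (PiM ({..<n} \<times> {..<m}) (\<lambda>ij. Ps (fst ij))) \<noteq> {}"
    proof -
      have "prob_space (Ps i)" if "i < n" for i
        using Ps that spQ by (auto simp: space_PiM space_prob_algebra)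
      then have "space (Ps (fst ij)) \<noteq> {}" if "ij \<in> {..<n} \<times> {..<m}" for ij
        using that prob_space.not_empty by fastforce
      then show ?thesis by (simp add: space_PiM PiE_eq_empty_iff)
    qed
  qed simp
  have "space (nm_sampling Mz Q n m) = space (sample_space Mz Q n m)"
    unfolding nm_sampling_def using False inner by (intro space_bind) auto
  then show ?thesis by simp
qed

theorem lemma3p3:
  fixes Mz :: "('x \<times> 'y) measure"
    and Q :: "('x \<times> 'y) measure measure"
    and F :: "('x \<Rightarrow> 'v) set"
    and G :: "('v \<Rightarrow> 'a) set"
    and l :: "'y \<Rightarrow> 'a \<Rightarrow> real"
    and M :: real
    and A :: "nat \<Rightarrow> nat \<Rightarrow> (nat \<times> nat \<Rightarrow> 'x \<times> 'y) \<Rightarrow> ('x \<Rightarrow> 'v)"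
    and n m :: nat
    and \<alpha> \<nu> :: real
  assumes Q_env: "Q \<in> space (prob_algebra (prob_algebra Mz))"
    and l_range: "\<And>y a. 0 \<le> l y a \<and> l y a \<le> M"
    and l_meas: "\<And>f g. f \<in> F \<Longrightarrow> g \<in> G \<Longrightarrow> loss_comp l g f \<in> borel_measurable Mz"
    and G_ne: "G \<noteq> {}"
    and A_F: "\<And>n m z. 1 \<le> n \<Longrightarrow> 1 \<le> m \<Longrightarrow>
                 z \<in> space (PiM ({..<n} \<times> {..<m}) (\<lambda>_. Mz)) \<Longrightarrow> A n m z \<in> F"
    and n_pos: "1 \<le> n" and m_pos: "1 \<le> m"
    and \<alpha>_pos: "\<alpha> > 0" and \<nu>_pos: "\<nu> > 0"
    and meas1: "{(z, Ps) \<in> space (nm_sampling Mz Q n m).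
                   d_nu \<nu> (Estar_emp l G n m (A n m z) z) (Estar_true l G n (A n m z) Ps) > \<alpha>}
                 \<in> sets (nm_sampling Mz Q n m)"
    and meas2: "{(z, Ps) \<in> space (nm_sampling Mz Q n m).
                   \<exists>gs. (\<forall>i<n. gs i \<in> G) \<and> (\<exists>f\<in>F.
                     d_nu \<nu> (E_emp l n m gs f z) (E_true l n gs f Ps) > \<alpha>)}
                 \<in> sets (nm_sampling Mz Q n m)"
  shows "measure (nm_sampling Mz Q n m)
           {(z, Ps) \<in> space (nm_sampling Mz Q n m).
              d_nu \<nu> (Estar_emp l G n m (A n m z) z) (Estar_true l G n (A n m z) Ps) > \<alpha>}
         \<le> measure (nm_sampling Mz Q n m)
           {(z, Ps) \<in> space (nm_sampling Mz Q n m).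
              \<exists>gs. (\<forall>i<n. gs i \<in> G) \<and> (\<exists>f\<in>F.
                d_nu \<nu> (E_emp l n m gs f z) (E_true l n gs f Ps) > \<alpha>)}"
proof (rule measure_mono_fmeasurable[OF _ meas1])
  show "{(z, Ps) \<in> space (nm_sampling Mz Q n m).
              d_nu \<nu> (Estar_emp l G n m (A n m z) z) (Estar_true l G n (A n m z) Ps) > \<alpha>}
     \<subseteq> {(z, Ps) \<in> space (nm_sampling Mz Q n m).
              \<exists>gs. (\<forall>i<n. gs i \<in> G) \<and> (\<exists>f\<in>F.
                d_nu \<nu> (E_emp l n m gs f z) (E_true l n gs f Ps) > \<alpha>)}"
  proof (clarsimp)
    fix z Ps
    assume sp: "(z, Ps) \<in> space (nm_sampling Mz Q n m)"
      and d: "\<alpha> < d_nu \<nu> (Estar_emp l G n m (A n m z) z) (Estar_true l G n (A n m z) Ps)"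
    have "z \<in> space (PiM ({..<n} \<times> {..<m}) (\<lambda>_. Mz))"
      using sp space_nm_sampling[OF Q_env, of n m]
      by (auto simp: sample_space_def space_pair_measure)
    then have fF: "A n m z \<in> F" using A_F n_pos m_pos by blast
    define f where "f = A n m z"
    define a where "a = (\<lambda>i g. (1 / real m) * (\<Sum>j<m. loss_comp l g f (z (i, j))))"
    define b where "b = (\<lambda>i g. (\<integral>x. loss_comp l g f x \<partial>(Ps i)))"
    have a0: "0 \<le> a i g" for i g
      unfolding a_def loss_comp_def using l_range by (simp add: sum_nonneg)
    have b0: "0 \<le> b i g" for i g
      unfolding b_def loss_comp_def using l_range by (simp add: integral_nonneg)
    have d2: "d_nu \<nu> ((1 / real n) * (\<Sum>i<n. INF g\<in>G. a i g)) ((1 / real n) * (\<Sum>i<n. INF g\<in>G. b i g)) > \<alpha>"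
      using d unfolding a_def b_def f_def Estar_emp_def Estar_true_def by simp
    obtain gs where gs: "\<forall>i<n. gs i \<in> G"
      and dg: "d_nu \<nu> ((1 / real n) * (\<Sum>i<n. a i (gs i))) ((1 / real n) * (\<Sum>i<n. b i (gs i))) > \<alpha>"
      using approx_two[OF G_ne a0 b0 n_pos \<nu>_pos \<alpha>_pos d2] by blast
    have e1: "E_emp l n m gs f z = (1 / real n) * (\<Sum>i<n. a i (gs i))"
      unfolding E_emp_def a_def by (simp add: sum_distrib_left)
    have e2: "E_true l n gs f Ps = (1 / real n) * (\<Sum>i<n. b i (gs i))"
      unfolding E_true_def b_def by simp
    show "\<exists>gs. (\<forall>i<n. gs i \<in> G) \<and> (\<exists>f\<in>F. \<alpha> < d_nu \<nu> (E_emp l n m gs f z) (E_true l n gs f Ps))"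
      using gs dg fF e1 e2 unfolding f_def by metis
  qed
next
  have Qp: "prob_space Q" using Q_env by (simp add: space_prob_algebra)
  interpret P: prob_space "PiM {..<n} (\<lambda>_. Q)" by (rule prob_space_PiM) (use Qp in auto)
  have "emeasure (nm_sampling Mz Q n m) {(z, Ps) \<in> space (nm_sampling Mz Q n m).
              \<exists>gs. (\<forall>i<n. gs i \<in> G) \<and> (\<exists>f\<in>F.
                d_nu \<nu> (E_emp l n m gs f z) (E_true l n gs f Ps) > \<alpha>)} \<le> 1"
    unfolding nm_sampling_def by (rule bind_emeasure_le1) (simp add: P.emeasure_space_1)
  then show "{(z, Ps) \<in> space (nm_sampling Mz Q n m).
              \<exists>gs. (\<forall>i<n. gs i \<in> G) \<and> (\<exists>f\<in>F.
                d_nu \<nu> (E_emp l n m gs f z) (E_true l n gs f Ps) > \<alpha>)} \<in> fmeasurable (nm_sampling Mz Q n m)"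
    using meas2 by (auto simp: fmeasurable_def top_unique intro: le_less_trans[OF _ ennreal_one_less_top])
qed

end
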